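(* Let $(\Omega,\mathcal{F},P_0)$ be a complete probability space, $\epsilon\in(0,1)$, $\mathcal{C}\subseteq\mathcal{F}$ a sub-$\sigma$-algebra, and $\rho$ a sublinear operator on $L^{2+\epsilon}_{\mathcal{F}}(\Omega,P_0)$ with representation set $\mathcal{P}$, satisfying the standing assumptions below. If $\xi\in L^{4+2\epsilon}_{\mathcal{F}}(\Omega,P_0)$ and $\rho$ is stable, then there exists $\hat\eta\in L^{2+\epsilon}_{\mathcal{C}}(\Omega,P_0)$ such that $$\rho\big((\xi-\hat\eta)^2\big)=\inf_{\eta\in L^{2+\epsilon}_{\mathcal{C}}(P_0)}\rho\big((\xi-\eta)^2\big).$$
   Context: A sublinear operator is a map $\rho:L^{2+\epsilon}_{\mathcal{F}}(\Omega,P_0)\to\mathbb{R}$ that is monotone, constant preserving, sub-additive and positively homogeneous. Its representation set $\mathcal{P}$ is the family of all linear expectations (identified with probability measures $P$) dominated by $\rho$, so $\rho(\xi)=\max_{P\in\mathcal{P}}E_P[\xi]$; for $\xi\in L^{4+2\epsilon}$, $\eta\in L^{2+\epsilon}$, $\rho((\xi-\eta)^2)$ means $\sup_{P\in\mathcal{P}}E_P[(\xi-\eta)^2]$. Write $f^P=dP/dP_0$, $\mathcal{D}=\{f^P:P\in\mathcal{P}\}$. Standing assumptions: every $P\in\mathcal{P}$ is equivalent to $P_0$; $\mathcal{D}$ is norm-bounded in $L^{1+\frac{2}{\epsilon}}_{\mathcal{F}}(P_0)$ and $\sigma(L^{1+\frac{2}{\epsilon}}(P_0),L^{1+\frac{\epsilon}{2}}(P_0))$-compact.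 $\rho$ is stable if for each $P\in\mathcal{P}$ the random variable $f^P/E_{P_0}[f^P\mid\mathcal{C}]$ lies in $\mathcal{D}$. $L^{2+\epsilon}_{\mathcal{C}}(P_0)$ denotes the $\mathcal{C}$-measurable elements of $L^{2+\epsilon}(P_0)$. *)

theory Defs
  imports "HOL-Probability.Probability"
begin

definition Lp :: "'a measure \<Rightarrow> real \<Rightarrow> ('a \<Rightarrow> real) set" where
  "Lp M p = {f. f \<in> borel_measurable M \<and> integrable M (\<lambda>x. \<bar>f x\<bar> powr p)}"

definition Lp_sub :: "'a measure \<Rightarrow> 'a measure \<Rightarrow> real \<Rightarrow> ('a \<Rightarrow> real) set" where
  "Lp_sub M C p = {f. f \<in> Lp M p \<and> f \<in> borel_measurable C}"

definition sublinear_operator :: "'a measure \<Rightarrow> real \<Rightarrow> (('a \<Rightarrow> real) \<Rightarrow> real) \<Rightarrow> bool" where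
  "sublinear_operator M p \<rho> \<longleftrightarrow>
     (\<forall>\<xi>\<in>Lp M p. \<forall>\<eta>\<in>Lp M p. (AE x in M. \<xi> x \<le> \<eta> x) \<longrightarrow> \<rho> \<xi> \<le> \<rho> \<eta>) \<and>
     (\<forall>c. \<rho> (\<lambda>_. c) = c) \<and>
     (\<forall>\<xi>\<in>Lp M p. \<forall>\<eta>\<in>Lp M p. \<rho> (\<lambda>x. \<xi> x + \<eta> x) \<le> \<rho> \<xi> + \<rho> \<eta>) \<and>
     (\<forall>\<xi>\<in>Lp M p. \<forall>c::real. c \<ge> 0 \<longrightarrow> \<rho> (\<lambda>x. c * \<xi> x) = c * \<rho> \<xi>)"

definition rep_set :: "'a measure \<Rightarrow> real \<Rightarrow> (('a \<Rightarrow> real) \<Rightarrow> real) \<Rightarrow> 'a measure set" where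
  "rep_set M p \<rho> = {P. prob_space P \<and> sets P = sets M \<and>
      (\<forall>\<xi>\<in>Lp M p. integrable P \<xi> \<and> (\<integral>x. \<xi> x \<partial>P) \<le> \<rho> \<xi>)}"

definition dens :: "'a measure \<Rightarrow> 'a measure \<Rightarrow> 'a \<Rightarrow> real" where
  "dens M P = (\<lambda>x. enn2real (RN_deriv M P x))"

text \<open>rho((xi - eta)^2) := sup over P in the representation set of E_P[(xi - eta)^2].\<close>
definition rho_sq :: "'a measure set \<Rightarrow> ('a \<Rightarrow> real) \<Rightarrow> ('a \<Rightarrow> real) \<Rightarrow> real" where
  "rho_sq \<P> \<xi> \<eta> = (SUP P\<in>\<P>. \<integral>x. (\<xi> x - \<eta> x)\<^sup>2 \<partial>P)"

definition weak_Lp_topology :: "'a measure \<Rightarrow> real \<Rightarrow> real \<Rightarrow> ('a \<Rightarrow> real) topology" where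
  "weak_Lp_topology M q r = topology_generated_by
     {{f \<in> Lp M q. (\<integral>x. f x * g x \<partial>M) \<in> U} | g U. g \<in> Lp M r \<and> open U}"

definition stable :: "'a measure \<Rightarrow> 'a measure \<Rightarrow> 'a measure set \<Rightarrow> bool" where
  "stable M C \<P> \<longleftrightarrow> (\<forall>P\<in>\<P>. \<exists>Q\<in>\<P>.
      AE x in M. dens M Q x = dens M P x / real_cond_exp M C (dens M P) x)"

end

theory Submission
  imports Defs
begin



lemma abs_powr_le_1_plus:
  fixes x s t :: real assumes "0 < s" "s \<le> t"
  shows "\<bar>x\<bar> powr s \<le> 1 + \<bar>x\<bar> powr t"
proof (cases "\<bar>x\<bar> \<le> 1")
  case True
  then have "\<bar>x\<bar> powr s \<le> 1" using assms by (simp add: powr_le1)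
  then show ?thesis by (smt (verit) powr_ge_zero)
next
  case False
  then have "\<bar>x\<bar> powr s \<le> \<bar>x\<bar> powr t" using assms by (intro powr_mono) auto
  then show ?thesis by simp
qed

lemma Lp_mono:
  assumes "finite_measure M" "0 < s" "s \<le> t" "f \<in> Lp M t"
  shows "f \<in> Lp M s"
proof -
  interpret finite_measure M by fact
  have m: "f \<in> borel_measurable M" and i: "integrable M (\<lambda>x. \<bar>f x\<bar> powr t)" using assms(4) by (auto simp: Lp_def)
  have "integrable M (\<lambda>x. \<bar>f x\<bar> powr s)"
    by (rule Bochner_Integration.integrable_bound[where f="\<lambda>x. 1 + \<bar>f x\<bar> powr t"])
       (use i m abs_powr_le_1_plus[OF assms(2,3)] in auto)
  then show ?thesis using m by (simp add: Lp_def)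
qed

lemma abs_add_powr_le:
  fixes a b p :: real assumes "0 \<le> p"
  shows "\<bar>a + b\<bar> powr p \<le> 2 powr p * (\<bar>a\<bar> powr p + \<bar>b\<bar> powr p)"
proof -
  have "\<bar>a + b\<bar> powr p \<le> (2 * max \<bar>a\<bar> \<bar>b\<bar>) powr p"
    using assms by (intro powr_mono2) auto
  also have "\<dots> = 2 powr p * max \<bar>a\<bar> \<bar>b\<bar> powr p" by (simp add: powr_mult)
  also have "max \<bar>a\<bar> \<bar>b\<bar> powr p \<le> \<bar>a\<bar> powr p + \<bar>b\<bar> powr p"
    by (cases "\<bar>a\<bar> \<le> \<bar>b\<bar>") (auto simp: max_def)
  finally show ?thesis by (simp add: mult_left_mono)
qed

lemma Lp_add:
  assumes "0 \<le> p" "f \<in> Lp M p" "g \<in> Lp M p"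
  shows "(\<lambda>x. f x + g x) \<in> Lp M p"
proof -
  have [measurable]: "f \<in> borel_measurable M" "g \<in> borel_measurable M" using assms by (auto simp: Lp_def)
  have i: "integrable M (\<lambda>x. \<bar>f x\<bar> powr p)" "integrable M (\<lambda>x. \<bar>g x\<bar> powr p)" using assms by (auto simp: Lp_def)
  have "integrable M (\<lambda>x. \<bar>f x + g x\<bar> powr p)"
    by (rule Bochner_Integration.integrable_bound[where f="\<lambda>x. 2 powr p * (\<bar>f x\<bar> powr p + \<bar>g x\<bar> powr p)"])
       (use i abs_add_powr_le[OF assms(1)] in auto)
  then show ?thesis by (simp add: Lp_def)
qed

lemma Lp_cmult:
  assumes "f \<in> Lp M p"
  shows "(\<lambda>x. c * f x) \<in> Lp M p"
proof -
  have [measurable]: "f \<in> borel_measurable M" using assms by (auto simp: Lp_def)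
  have i: "integrable M (\<lambda>x. \<bar>f x\<bar> powr p)" using assms by (auto simp: Lp_def)
  have "integrable M (\<lambda>x. \<bar>c\<bar> powr p * \<bar>f x\<bar> powr p)" using i by auto
  then have "integrable M (\<lambda>x. \<bar>c * f x\<bar> powr p)" by (simp add: abs_mult powr_mult)
  then show ?thesis by (simp add: Lp_def)
qed

lemma Lp_diff:
  assumes "0 \<le> p" "f \<in> Lp M p" "g \<in> Lp M p"
  shows "(\<lambda>x. f x - g x) \<in> Lp M p"
  using Lp_add[OF assms(1,2) Lp_cmult[OF assms(3), of "-1"]] by simp

lemma Lp_const:
  assumes "finite_measure M"
  shows "(\<lambda>x. c) \<in> Lp M p"
proof -
  interpret finite_measure M by fact
  show ?thesis by (simp add: Lp_def)
qed

lemma Lp_mult: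
  assumes "0 < p" "f \<in> Lp M p" "g \<in> Lp M p"
  shows "(\<lambda>x. f x * g x) \<in> Lp M (p/2)"
proof -
  have [measurable]: "f \<in> borel_measurable M" "g \<in> borel_measurable M" using assms by (auto simp: Lp_def)
  have i: "integrable M (\<lambda>x. \<bar>f x\<bar> powr p)" "integrable M (\<lambda>x. \<bar>g x\<bar> powr p)" using assms by (auto simp: Lp_def)
  have b: "\<bar>f x * g x\<bar> powr (p/2) \<le> \<bar>f x\<bar> powr p + \<bar>g x\<bar> powr p" for x
  proof -
    have "\<bar>f x * g x\<bar> powr (p/2) = \<bar>f x\<bar> powr (p/2) * \<bar>g x\<bar> powr (p/2)" by (simp add: abs_mult powr_mult)
    also have "\<dots> \<le> (\<bar>f x\<bar> powr (p/2))\<^sup>2 + (\<bar>g x\<bar> powr (p/2))\<^sup>2"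
      using sum_squares_bound[of "\<bar>f x\<bar> powr (p/2)" "\<bar>g x\<bar> powr (p/2)"]
        mult_nonneg_nonneg[OF powr_ge_zero powr_ge_zero, of "\<bar>f x\<bar>" "p/2" "\<bar>g x\<bar>" "p/2"] by linarith
    also have "(\<bar>f x\<bar> powr (p/2))\<^sup>2 = \<bar>f x\<bar> powr p"
      unfolding power2_eq_square powr_add[symmetric] by simp
    also have "(\<bar>g x\<bar> powr (p/2))\<^sup>2 = \<bar>g x\<bar> powr p"
      unfolding power2_eq_square powr_add[symmetric] by simp
    finally show ?thesis .
  qed
  have "integrable M (\<lambda>x. \<bar>f x * g x\<bar> powr (p/2))"
    by (rule Bochner_Integration.integrable_bound[where f="\<lambda>x. \<bar>f x\<bar> powr p + \<bar>g x\<bar> powr p"])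
       (use i b in auto)
  then show ?thesis by (simp add: Lp_def)
qed

lemma Young_integrable:
  assumes "1 < q" "1 < r" "1/q + 1/r = 1" "f \<in> Lp M q" "h \<in> Lp M r"
  shows "integrable M (\<lambda>x. f x * h x)"
    and "\<And>x. \<bar>f x * h x\<bar> \<le> \<bar>f x\<bar> powr q / q + \<bar>h x\<bar> powr r / r"
proof -
  have [measurable]: "f \<in> borel_measurable M" "h \<in> borel_measurable M" using assms by (auto simp: Lp_def)
  have i: "integrable M (\<lambda>x. \<bar>f x\<bar> powr q)" "integrable M (\<lambda>x. \<bar>h x\<bar> powr r)" using assms by (auto simp: Lp_def)
  show b: "\<bar>f x * h x\<bar> \<le> \<bar>f x\<bar> powr q / q + \<bar>h x\<bar> powr r / r" for x
    using Youngs_inequality[OF assms(1-3), of "\<bar>f x\<bar>" "\<bar>h x\<bar>"] by (simp add: abs_mult)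
  show "integrable M (\<lambda>x. f x * h x)"
    by (rule Bochner_Integration.integrable_bound[where f="\<lambda>x. \<bar>f x\<bar> powr q / q + \<bar>h x\<bar> powr r / r"])
       (use i b in \<open>auto intro: order_trans[OF _ abs_ge_self]\<close>)
qed




locale setting =
  fixes M C :: "'a measure" and \<epsilon> :: real and \<rho> :: "('a \<Rightarrow> real) \<Rightarrow> real" and \<xi> :: "'a \<Rightarrow> real"
  assumes PS: "prob_space M" and CM: "complete_measure M"
    and eps0: "0 < \<epsilon>" and eps1: "\<epsilon> < 1"
    and subalg: "subalgebra M C"
    and subl: "sublinear_operator M (2 + \<epsilon>) \<rho>"
    and attain: "\<forall>\<zeta>\<in>Lp M (2 + \<epsilon>). \<exists>P\<in>rep_set M (2 + \<epsilon>) \<rho>. (\<integral>x. \<zeta> x \<partial>P) = \<rho> \<zeta>"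
    and ac: "\<forall>P\<in>rep_set M (2 + \<epsilon>) \<rho>. absolutely_continuous M P \<and> absolutely_continuous P M"
    and densLq: "\<forall>P\<in>rep_set M (2 + \<epsilon>) \<rho>. dens M P \<in> Lp M (1 + 2 / \<epsilon>)"
    and bndB: "\<exists>B. \<forall>P\<in>rep_set M (2 + \<epsilon>) \<rho>. (\<integral>x. \<bar>dens M P x\<bar> powr (1 + 2 / \<epsilon>) \<partial>M) \<le> B"
    and cpt: "compactin (weak_Lp_topology M (1 + 2 / \<epsilon>) (1 + \<epsilon> / 2))
           (dens M ` rep_set M (2 + \<epsilon>) \<rho>)"
    and xiL: "\<xi> \<in> Lp M (4 + 2 * \<epsilon>)"
    and stab: "stable M C (rep_set M (2 + \<epsilon>) \<rho>)"
begin

abbreviation "PP \<equiv> rep_set M (2 + \<epsilon>) \<rho>"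
abbreviation "LC \<equiv> Lp_sub M C (2 + \<epsilon>)"
abbreviation "Lpp \<equiv> Lp M (2 + \<epsilon>)"

interpretation M: prob_space M by (rule PS)

lemma fm: "finite_measure M" by unfold_locales

lemma xi_Lp: "\<xi> \<in> Lpp"
  by (rule Lp_mono[OF fm _ _ xiL]) (use eps0 in auto)

lemma xi_meas[measurable]: "\<xi> \<in> borel_measurable M"
  using xiL by (simp add: Lp_def)

lemma Lpp_meas: "u \<in> Lpp \<Longrightarrow> u \<in> borel_measurable M"
  by (simp add: Lp_def)

lemma LC_Lpp: "\<eta> \<in> LC \<Longrightarrow> \<eta> \<in> Lpp"
  by (simp add: Lp_sub_def)

lemma LC_measC: "\<eta> \<in> LC \<Longrightarrow> \<eta> \<in> borel_measurable C"
  by (simp add: Lp_sub_def)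

lemma zero_LC: "(\<lambda>x. 0) \<in> LC"
  using Lp_const[OF fm] by (simp add: Lp_sub_def)

lemma PP_D:
  assumes "P \<in> PP"
  shows "prob_space P" "sets P = sets M" "\<And>\<zeta>. \<zeta> \<in> Lpp \<Longrightarrow> integrable P \<zeta> \<and> (\<integral>x. \<zeta> x \<partial>P) \<le> \<rho> \<zeta>"
  using assms by (auto simp: rep_set_def)

lemma dens_meas[measurable]: "dens M P \<in> borel_measurable M"
  unfolding dens_def by measurable

lemma dens_nonneg: "0 \<le> dens M P x"
  unfolding dens_def by simp

lemma PP_density:
  assumes "P \<in> PP"
  shows "P = density M (\<lambda>x. ennreal (dens M P x))"
proof -
  have acP: "absolutely_continuous M P" using ac assms by auto
  have sP: "sets P = sets M" using PP_D[OF assms] by simp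
  have sfP: "sigma_finite_measure P" using PP_D(1)[OF assms] by (rule prob_space_imp_sigma_finite)
  have fin: "AE x in M. RN_deriv M P x \<noteq> \<infinity>"
    by (rule M.RN_deriv_finite[OF sfP acP sP])
  have "P = density M (RN_deriv M P)" using M.density_RN_deriv[OF acP sP] by simp
  also have "\<dots> = density M (\<lambda>x. ennreal (dens M P x))"
  proof (rule density_cong)
    show "AE x in M. RN_deriv M P x = ennreal (dens M P x)"
      using fin by eventually_elim (simp add: dens_def ennreal_enn2real_if)
  qed auto
  finally show ?thesis .
qed

lemma PP_integral:
  assumes "P \<in> PP" and [measurable]: "h \<in> borel_measurable M"
  shows "integral\<^sup>L P h = (\<integral>x. dens M P x * h x \<partial>M)"
    and "integrable P h \<longleftrightarrow> integrable M (\<lambda>x. dens M P x * h x)"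
proof -
  let ?D = "density M (\<lambda>x. ennreal (dens M P x))"
  have e: "P = ?D" by (rule PP_density[OF assms(1)])
  have "integral\<^sup>L P h = integral\<^sup>L ?D h" using e by (rule arg_cong)
  also have "\<dots> = (\<integral>x. dens M P x * h x \<partial>M)"
    by (subst integral_density) (auto simp: dens_nonneg)
  finally show "integral\<^sup>L P h = (\<integral>x. dens M P x * h x \<partial>M)" .
  have "integrable P h = integrable ?D h" using e by (rule arg_cong)
  also have "\<dots> = integrable M (\<lambda>x. dens M P x * h x)"
    by (subst integrable_density) (auto simp: dens_nonneg)
  finally show "integrable P h \<longleftrightarrow> integrable M (\<lambda>x. dens M P x * h x)" .
qed

lemma dens_int1:
  assumes "P \<in> PP"
  shows "integrable M (dens M P)" "(\<integral>x. dens M P x \<partial>M) = 1"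
proof -
  interpret P: prob_space P using PP_D[OF assms] by simp
  have "integrable P (\<lambda>x. 1::real)" by simp
  then show "integrable M (dens M P)" using PP_integral(2)[OF assms, of "\<lambda>x. 1"] by simp
  have "(\<integral>x. 1 \<partial>P) = (1::real)" by (simp add: P.prob_space)
  then show "(\<integral>x. dens M P x \<partial>M) = 1" using PP_integral(1)[OF assms, of "\<lambda>x. 1"] by simp
qed

definition "qq = 1 + 2 / \<epsilon>"
definition "rr = 1 + \<epsilon> / 2"

lemma qr: "1 < qq" "1 < rr" "1/qq + 1/rr = 1" "rr = (2 + \<epsilon>)/2"
proof -
  show "1 < qq" using eps0 by (simp add: qq_def)
  show "1 < rr" using eps0 by (simp add: rr_def)
  show "rr = (2 + \<epsilon>)/2" by (simp add: rr_def field_simps)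
  have "1/qq = \<epsilon> / (\<epsilon> + 2)" using eps0 by (simp add: qq_def field_simps)
  moreover have "1/rr = 2 / (\<epsilon> + 2)" using eps0 by (simp add: rr_def field_simps)
  moreover have "\<epsilon> / (\<epsilon> + 2) + 2 / (\<epsilon> + 2) = 1" using eps0 by (simp add: add_divide_distrib[symmetric])
  ultimately show "1/qq + 1/rr = 1" by simp
qed

lemma dens_Lq: "P \<in> PP \<Longrightarrow> dens M P \<in> Lp M qq"
  using densLq by (simp add: qq_def)

lemma prod_Lr: "u \<in> Lpp \<Longrightarrow> v \<in> Lpp \<Longrightarrow> (\<lambda>x. u x * v x) \<in> Lp M rr"
  using Lp_mult[of "2+\<epsilon>" u M v] eps0 by (simp add: qr(4))

lemma int3:
  assumes "P \<in> PP" "u \<in> Lpp" "v \<in> Lpp"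
  shows "integrable M (\<lambda>x. dens M P x * (u x * v x))"
  using Young_integrable(1)[OF qr(1-3) dens_Lq[OF assms(1)] prod_Lr[OF assms(2,3)]] .

lemma Lpp_add: "u \<in> Lpp \<Longrightarrow> v \<in> Lpp \<Longrightarrow> (\<lambda>x. u x + v x) \<in> Lpp"
  using Lp_add[of "2+\<epsilon>"] eps0 by simp
lemma Lpp_diff: "u \<in> Lpp \<Longrightarrow> v \<in> Lpp \<Longrightarrow> (\<lambda>x. u x - v x) \<in> Lpp"
  using Lp_diff[of "2+\<epsilon>"] eps0 by simp
lemma Lpp_cmult: "u \<in> Lpp \<Longrightarrow> (\<lambda>x. c * u x) \<in> Lpp"
  by (rule Lp_cmult)
lemma Lpp_const: "(\<lambda>x. c) \<in> Lpp"
  using Lp_const[OF fm] by simp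

lemma bound3:
  assumes "u \<in> Lpp"
  shows "\<exists>K. \<forall>P\<in>PP. (\<integral>x. dens M P x * (u x * u x) \<partial>M) \<le> K"
proof -
  obtain B where B: "\<forall>P\<in>PP. (\<integral>x. \<bar>dens M P x\<bar> powr qq \<partial>M) \<le> B" using bndB by (auto simp: qq_def)
  have h: "(\<lambda>x. u x * u x) \<in> Lp M rr" by (rule prod_Lr[OF assms assms])
  then have ih: "integrable M (\<lambda>x. \<bar>u x * u x\<bar> powr rr)" by (simp add: Lp_def)
  show ?thesis
  proof (intro exI ballI)
    fix P assume P: "P \<in> PP"
    have id: "integrable M (\<lambda>x. \<bar>dens M P x\<bar> powr qq)" using dens_Lq[OF P] by (simp add: Lp_def)
    have "(\<integral>x. dens M P x * (u x * u x) \<partial>M) \<le> (\<integral>x. \<bar>dens M P x\<bar> powr qq / qq + \<bar>u x * u x\<bar> powr rr / rr \<partial>M)"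
      by (rule integral_mono[OF int3[OF P assms assms]])
         (use id ih Young_integrable(2)[OF qr(1-3) dens_Lq[OF P] h] in \<open>auto intro: order_trans[OF abs_ge_self]\<close>)
    also have "\<dots> = (\<integral>x. \<bar>dens M P x\<bar> powr qq \<partial>M) / qq + (\<integral>x. \<bar>u x * u x\<bar> powr rr \<partial>M) / rr"
      using id ih by simp
    also have "\<dots> \<le> B / qq + (\<integral>x. \<bar>u x * u x\<bar> powr rr \<partial>M) / rr"
      using B P qr by (auto simp: divide_right_mono)
    finally show "(\<integral>x. dens M P x * (u x * u x) \<partial>M) \<le> B / qq + (\<integral>x. \<bar>u x * u x\<bar> powr rr \<partial>M) / rr" .
  qed
qed

end



lemma powr_convex_ineq:
  fixes a b t p :: real
  assumes "0 \<le> a" "0 \<le> b" "0 < t" "t < 1" "1 \<le> p"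
  shows "((1 - t) * a + t * b) powr p \<le> (1 - t) * a powr p + t * b powr p"
proof -
  consider "a = 0" | "b = 0" | "0 < a" "0 < b" using assms by linarith
  then show ?thesis
  proof cases
    case 1
    have "(t * b) powr p = t powr p * b powr p" using assms by (simp add: powr_mult)
    also have "\<dots> \<le> t * b powr p" using powr_le_one_le[of t p] assms by (intro mult_right_mono) auto
    finally show ?thesis using 1 by simp
  next
    case 2
    have "((1 - t) * a) powr p = (1 - t) powr p * a powr p" using assms by (simp add: powr_mult)
    also have "\<dots> \<le> (1 - t) * a powr p" using powr_le_one_le[of "1 - t" p] assms by (intro mult_right_mono) auto
    finally show ?thesis using 2 by simp
  next
    case 3
    show ?thesis using convex_onD[OF powr_convex[OF assms(5)], of t a b] 3 assms by simp
  qed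
qed

lemma convex_abs_powr:
  fixes p :: real assumes "1 \<le> p"
  shows "convex_on UNIV (\<lambda>x::real. \<bar>x\<bar> powr p)"
proof (rule convex_onI)
  fix t x y :: real assume t: "0 < t" "t < 1"
  have "\<bar>(1 - t) *\<^sub>R x + t *\<^sub>R y\<bar> powr p \<le> ((1 - t) * \<bar>x\<bar> + t * \<bar>y\<bar>) powr p"
    using t assms by (intro powr_mono2) (auto intro: order_trans[OF abs_triangle_ineq] simp: abs_mult)
  also have "\<dots> \<le> (1 - t) * \<bar>x\<bar> powr p + t * \<bar>y\<bar> powr p"
    by (rule powr_convex_ineq) (use t assms in auto)
  finally show "\<bar>(1 - t) *\<^sub>R x + t *\<^sub>R y\<bar> powr p \<le> (1 - t) * \<bar>x\<bar> powr p + t * \<bar>y\<bar> powr p" .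
qed auto

lemma Lp_abs_powr:
  assumes "0 < p" "f \<in> Lp M t"
  shows "(\<lambda>x. \<bar>f x\<bar> powr p) \<in> Lp M (t / p)"
proof -
  have [measurable]: "f \<in> borel_measurable M" using assms by (simp add: Lp_def)
  have "integrable M (\<lambda>x. \<bar>f x\<bar> powr t)" using assms by (simp add: Lp_def)
  moreover have "\<bar>\<bar>f x\<bar> powr p\<bar> powr (t / p) = \<bar>f x\<bar> powr t" for x
    using assms by (simp add: powr_powr)
  ultimately show ?thesis by (simp add: Lp_def)
qed




context setting
begin

interpretation M: prob_space M by (rule PS)

lemma MC: "sigma_finite_subalgebra M C"
  by (rule finite_measure_subalgebra_is_sigma_finite) (use subalg fm in \<open>auto simp: finite_measure_subalgebra_def finite_measure_subalgebra_axioms_def\<close>)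

lemma subalg_PP: "P \<in> PP \<Longrightarrow> subalgebra P C"
  using subalg PP_D(2)[of P] by (auto simp: subalgebra_def dest: sets_eq_imp_space_eq)

lemma PC: "P \<in> PP \<Longrightarrow> sigma_finite_subalgebra P C"
  using subalg_PP[of P] PP_D(1)[of P]
  by (intro finite_measure_subalgebra_is_sigma_finite)
     (auto simp: finite_measure_subalgebra_def finite_measure_subalgebra_axioms_def prob_space_def)

lemma measC_M: "h \<in> borel_measurable C \<Longrightarrow> h \<in> borel_measurable M"
  using measurable_from_subalg[OF subalg] by blast

lemma pyth:
  assumes P: "P \<in> PP"
  shows "\<exists>m g. m \<in> LC \<and> g \<in> borel_measurable C \<and> (AE x in M. 0 < g x) \<and>
     (\<forall>\<eta>\<in>LC. integrable M (\<lambda>x. g x * (m x - \<eta> x)\<^sup>2) \<and>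
        (\<integral>x. (\<xi> x - \<eta> x)\<^sup>2 \<partial>P) = (\<integral>x. (\<xi> x - m x)\<^sup>2 \<partial>P) + (\<integral>x. g x * (m x - \<eta> x)\<^sup>2 \<partial>M))"
proof -
  interpret MC: sigma_finite_subalgebra M C by (rule MC)
  define f where "f = dens M P"
  define g where "g = real_cond_exp M C f"
  have [measurable]: "f \<in> borel_measurable M" unfolding f_def by simp
  have gC[measurable]: "g \<in> borel_measurable C" unfolding g_def by simp
  have gM[measurable]: "g \<in> borel_measurable M" unfolding g_def by simp
  have fint: "integrable M f" unfolding f_def by (rule dens_int1[OF P])
  obtain Q where Q: "Q \<in> PP" and fQ: "AE x in M. dens M Q x = f x / g x"
    using stab P unfolding stable_def f_def g_def by blast
  define fQ where "fQ = dens M Q"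
  have [measurable]: "fQ \<in> borel_measurable M" unfolding fQ_def by simp
  have fQ': "AE x in M. fQ x = inverse (g x) * f x" using fQ unfolding fQ_def
    by eventually_elim (simp add: divide_inverse mult.commute)
  have fQint: "integrable M fQ" "(\<integral>x. fQ x \<partial>M) = 1" unfolding fQ_def using dens_int1[OF Q] by auto
  have gpos: "AE x in M. 0 \<le> g x" unfolding g_def
    by (rule MC.real_cond_exp_pos) (auto simp: f_def dens_nonneg)
  have int_ig: "integrable M (\<lambda>x. inverse (g x) * f x)"
    by (rule integrable_cong_AE_imp[OF fQint(1)]) (use fQ' in auto)
  have "(\<integral>x. inverse (g x) * g x \<partial>M) = (\<integral>x. inverse (g x) * f x \<partial>M)"
    unfolding g_def by (rule MC.real_cond_exp_intg(2)) (use int_ig[unfolded g_def] in auto)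
  also have "\<dots> = (\<integral>x. fQ x \<partial>M)"
    by (rule integral_cong_AE) (use fQ' in auto)
  also have "\<dots> = 1" by (rule fQint(2))
  finally have i1: "(\<integral>x. inverse (g x) * g x \<partial>M) = 1" .
  define Z where "Z = {x \<in> space M. g x = 0}"
  have Zs: "Z \<in> sets M" unfolding Z_def by measurable
  have "(\<integral>x. inverse (g x) * g x \<partial>M) = (\<integral>x. indicator (space M - Z) x \<partial>M)"
    by (rule Bochner_Integration.integral_cong) (auto simp: Z_def indicator_def)
  then have "measure M (space M - Z) = 1" using i1 by (simp add: Int_absorb2 Diff_subset)
  then have "measure M Z = 0" using M.prob_compl[OF Zs] by simp
  then have "emeasure M Z = 0" using Zs by (simp add: M.emeasure_eq_measure)
  then have gnz: "AE x in M. g x \<noteq> 0"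
    using Zs by (auto simp: AE_iff_measurable[OF Zs] Z_def)
  have gp: "AE x in M. 0 < g x" using gnz gpos by eventually_elim auto
  have fgfQ: "AE x in M. f x = g x * fQ x" using gnz fQ' by eventually_elim auto
  have QM_C: "emeasure Q A = emeasure M A" if A: "A \<in> sets C" for A
  proof -
    interpret Q: prob_space Q using PP_D(1)[OF Q] .
    have AM[measurable]: "A \<in> sets M" using A subalg by (auto simp: subalgebra_def)
    have AQ: "A \<in> sets Q" using AM PP_D(2)[OF Q] by simp
    have "measure Q A = (\<integral>x. indicator A x \<partial>Q)" using AQ by simp
    also have "\<dots> = (\<integral>x. fQ x * indicator A x \<partial>M)"
      unfolding fQ_def by (rule PP_integral(1)[OF Q]) simp
    also have "\<dots> = (\<integral>x. (indicator A x * inverse (g x)) * f x \<partial>M)"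
      by (rule integral_cong_AE) (use fQ' in auto)
    also have "\<dots> = (\<integral>x. (indicator A x * inverse (g x)) * g x \<partial>M)"
    proof -
      have "integrable M (\<lambda>x. (indicator A x * inverse (g x)) * f x)"
        using integrable_mult_indicator[OF AM int_ig] by (simp add: mult.assoc)
      then show ?thesis unfolding g_def
        by (intro MC.real_cond_exp_intg(2)[symmetric]) (use A in auto)
    qed
    also have "\<dots> = (\<integral>x. indicator A x \<partial>M)"
      by (rule integral_cong_AE) (use gnz in auto)
    also have "\<dots> = measure M A" using AM by simp
    finally show ?thesis using AM AQ by (simp add: M.emeasure_eq_measure Q.emeasure_eq_measure)
  qed
  have restr: "restr_to_subalg Q C = restr_to_subalg M C"
    by (rule measure_eqI) (auto simp: sets_restr_to_subalg[OF subalg] sets_restr_to_subalg[OF subalg_PP[OF Q]]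
         emeasure_restr_to_subalg[OF subalg] emeasure_restr_to_subalg[OF subalg_PP[OF Q]] QM_C)
  have QM_int: "integrable M h" if [measurable]: "h \<in> borel_measurable C" "integrable Q h" for h :: "'a \<Rightarrow> real"
  proof -
    have "integrable (restr_to_subalg Q C) h" by (rule integrable_in_subalg[OF subalg_PP[OF Q]]) (use that in auto)
    then have "integrable (restr_to_subalg M C) h" using restr by simp
    then show ?thesis by (rule integrable_from_subalg[OF subalg])
  qed
  interpret QC: sigma_finite_subalgebra Q C by (rule PC[OF Q])
  define m where "m = real_cond_exp Q C \<xi>"
  have mC[measurable]: "m \<in> borel_measurable C" unfolding m_def by simp
  have mM[measurable]: "m \<in> borel_measurable M" by (rule measC_M[OF mC])
  have xiQm[measurable]: "\<xi> \<in> borel_measurable Q"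
    by (subst measurable_cong_sets[OF PP_D(2)[OF Q] refl]) simp
  have xiQ: "integrable Q \<xi>" using PP_D(3)[OF Q xi_Lp] by simp
  have mLp: "m \<in> Lpp"
  proof -
    have e: "(\<lambda>x. \<bar>\<xi> x\<bar> powr (2 + \<epsilon>)) \<in> Lp M ((4 + 2 * \<epsilon>) / (2 + \<epsilon>))"
      by (rule Lp_abs_powr[OF _ xiL]) (use eps0 in auto)
    have "(4 + 2 * \<epsilon>) / (2 + \<epsilon>) = 2" using eps0 by (simp add: field_simps)
    with e have h2: "(\<lambda>x. \<bar>\<xi> x\<bar> powr (2 + \<epsilon>)) \<in> Lp M 2" by simp
    have "(\<lambda>x. \<bar>\<xi> x\<bar> powr (2 + \<epsilon>)) \<in> Lp M rr"
      by (rule Lp_mono[OF fm _ _ h2]) (use qr eps1 in \<open>auto simp: rr_def\<close>)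
    then have "integrable M (\<lambda>x. fQ x * \<bar>\<xi> x\<bar> powr (2 + \<epsilon>))"
      unfolding fQ_def by (rule Young_integrable(1)[OF qr(1-3) dens_Lq[OF Q]])
    then have iQ: "integrable Q (\<lambda>x. \<bar>\<xi> x\<bar> powr (2 + \<epsilon>))"
      unfolding fQ_def by (subst PP_integral(2)[OF Q]) auto
    have "integrable Q (\<lambda>x. \<bar>m x\<bar> powr (2 + \<epsilon>))"
      unfolding m_def
      by (rule QC.integrable_convex_cond_exp[where I=UNIV, OF xiQ _ _ iQ convex_abs_powr])
         (use eps0 in auto)
    then have "integrable M (\<lambda>x. \<bar>m x\<bar> powr (2 + \<epsilon>))" by (intro QM_int) auto
    then show ?thesis by (simp add: Lp_def)
  qed
  have mLC: "m \<in> LC" using mLp mC by (simp add: Lp_sub_def)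
  have orth: "(\<integral>x. f x * (\<xi> x * k x) \<partial>M) = (\<integral>x. f x * (m x * k x) \<partial>M)"
    if kC[measurable]: "k \<in> borel_measurable C" and kL: "k \<in> Lpp" for k
  proof -
    have kM[measurable]: "k \<in> borel_measurable M" by (rule measC_M[OF kC])
    have i1: "integrable M (\<lambda>x. f x * (\<xi> x * k x))" unfolding f_def by (rule int3[OF P xi_Lp kL])
    have i2: "integrable M (\<lambda>x. f x * (m x * k x))" unfolding f_def by (rule int3[OF P mLp kL])
    have "(\<integral>x. f x * (\<xi> x * k x) \<partial>M) = (\<integral>x. fQ x * ((g x * k x) * \<xi> x) \<partial>M)"
      by (rule integral_cong_AE) (use fgfQ in auto)
    also have "\<dots> = (\<integral>x. (g x * k x) * \<xi> x \<partial>Q)"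
      unfolding fQ_def by (rule PP_integral(1)[OF Q, symmetric]) simp
    also have "\<dots> = (\<integral>x. (g x * k x) * m x \<partial>Q)"
    proof -
      have "integrable M (\<lambda>x. fQ x * ((g x * k x) * \<xi> x))"
        using i1 by (rule integrable_cong_AE_imp) (use fgfQ in auto)
      then have "integrable Q (\<lambda>x. (g x * k x) * \<xi> x)"
        unfolding fQ_def by (subst PP_integral(2)[OF Q]) auto
      then show ?thesis unfolding m_def by (intro QC.real_cond_exp_intg(2)[symmetric]) auto
    qed
    also have "\<dots> = (\<integral>x. fQ x * ((g x * k x) * m x) \<partial>M)"
      unfolding fQ_def by (rule PP_integral(1)[OF Q]) simp
    also have "\<dots> = (\<integral>x. f x * (m x * k x) \<partial>M)"
      by (rule integral_cong_AE) (use fgfQ in auto)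
    finally show ?thesis .
  qed
  have condg: "integrable M (\<lambda>x. g x * k x) \<and> (\<integral>x. f x * k x \<partial>M) = (\<integral>x. g x * k x \<partial>M)"
    if kC[measurable]: "k \<in> borel_measurable C" and ki: "integrable M (\<lambda>x. f x * k x)" for k
  proof -
    have ki': "integrable M (\<lambda>x. k x * f x)" using ki by (simp add: mult.commute)
    have "integrable M (\<lambda>x. k x * g x)" unfolding g_def by (rule MC.real_cond_exp_intg(1)[OF ki']) auto
    moreover have "(\<integral>x. k x * g x \<partial>M) = (\<integral>x. k x * f x \<partial>M)" unfolding g_def by (rule MC.real_cond_exp_intg(2)[OF ki']) auto
    ultimately show ?thesis by (simp add: mult.commute)
  qed
  show ?thesis
  proof (intro exI conjI ballI)
    show "m \<in> LC" by (rule mLC)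
    show "g \<in> borel_measurable C" by (rule gC)
    show "AE x in M. 0 < g x" by (rule gp)
    fix \<eta> assume eta: "\<eta> \<in> LC"
    define k where "k = (\<lambda>x. m x - \<eta> x)"
    have etaL: "\<eta> \<in> Lpp" using eta by (rule LC_Lpp)
    have [measurable]: "\<eta> \<in> borel_measurable C" using eta by (rule LC_measC)
    have [measurable]: "\<eta> \<in> borel_measurable M" by (rule measC_M) simp
    have kC[measurable]: "k \<in> borel_measurable C" unfolding k_def by simp
    have kL: "k \<in> Lpp" unfolding k_def by (rule Lpp_diff[OF mLp etaL])
    have dL: "(\<lambda>x. \<xi> x - m x) \<in> Lpp" by (rule Lpp_diff[OF xi_Lp mLp])
    have ikk: "integrable M (\<lambda>x. f x * (k x * k x))" unfolding f_def by (rule int3[OF P kL kL])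
    from condg[of "\<lambda>x. k x * k x", OF _ ikk]
    have cg: "integrable M (\<lambda>x. g x * (k x * k x))" "(\<integral>x. f x * (k x * k x) \<partial>M) = (\<integral>x. g x * (k x * k x) \<partial>M)"
      by auto
    show "integrable M (\<lambda>x. g x * (m x - \<eta> x)\<^sup>2)" using cg(1) by (simp add: k_def power2_eq_square)
    have idd: "integrable M (\<lambda>x. f x * ((\<xi> x - m x) * (\<xi> x - m x)))" unfolding f_def by (rule int3[OF P dL dL])
    have ixk: "integrable M (\<lambda>x. f x * (\<xi> x * k x))" unfolding f_def by (rule int3[OF P xi_Lp kL])
    have imk: "integrable M (\<lambda>x. f x * (m x * k x))" unfolding f_def by (rule int3[OF P mLp kL])
    have "(\<integral>x. (\<xi> x - \<eta> x)\<^sup>2 \<partial>P) = (\<integral>x. f x * (\<xi> x - \<eta> x)\<^sup>2 \<partial>M)"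
      unfolding f_def by (rule PP_integral(1)[OF P]) simp
    also have "\<dots> = (\<integral>x. f x * ((\<xi> x - m x) * (\<xi> x - m x)) + 2 * (f x * (\<xi> x * k x) - f x * (m x * k x)) + f x * (k x * k x) \<partial>M)"
      by (rule Bochner_Integration.integral_cong) (auto simp: k_def power2_eq_square algebra_simps)
    also have "\<dots> = (\<integral>x. f x * ((\<xi> x - m x) * (\<xi> x - m x)) \<partial>M) + 2 * ((\<integral>x. f x * (\<xi> x * k x) \<partial>M) - (\<integral>x. f x * (m x * k x) \<partial>M)) + (\<integral>x. f x * (k x * k x) \<partial>M)"
      using idd ixk imk ikk by simp
    also have "\<dots> = (\<integral>x. f x * ((\<xi> x - m x) * (\<xi> x - m x)) \<partial>M) + (\<integral>x. g x * (k x * k x) \<partial>M)"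
      using orth[OF kC kL] cg(2) by simp
    also have "(\<integral>x. f x * ((\<xi> x - m x) * (\<xi> x - m x)) \<partial>M) = (\<integral>x. (\<xi> x - m x)\<^sup>2 \<partial>P)"
      unfolding f_def by (subst PP_integral(1)[OF P]) (auto simp: power2_eq_square)
    finally show "(\<integral>x. (\<xi> x - \<eta> x)\<^sup>2 \<partial>P) = (\<integral>x. (\<xi> x - m x)\<^sup>2 \<partial>P) + (\<integral>x. g x * (m x - \<eta> x)\<^sup>2 \<partial>M)"
      by (simp add: k_def power2_eq_square)
  qed
qed

end



context setting
begin

definition "Phi P \<eta> = (\<integral>x. (\<xi> x - \<eta> x)\<^sup>2 \<partial>P)"
definition "G P = (INF \<eta>\<in>LC. Phi P \<eta>)"

lemma Phi_nonneg: "0 \<le> Phi P \<eta>"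
  unfolding Phi_def by simp

lemma LC_measM: "\<eta> \<in> LC \<Longrightarrow> \<eta> \<in> borel_measurable M"
  by (rule measC_M[OF LC_measC])

lemma LC_ne: "LC \<noteq> {}" using zero_LC by blast

lemma Phi_dens: "P \<in> PP \<Longrightarrow> \<eta> \<in> LC \<Longrightarrow> Phi P \<eta> = (\<integral>x. dens M P x * (\<xi> x - \<eta> x)\<^sup>2 \<partial>M)"
proof -
  assume P: "P \<in> PP" and eta: "\<eta> \<in> LC"
  have [measurable]: "\<eta> \<in> borel_measurable M" by (rule LC_measM[OF eta])
  show ?thesis unfolding Phi_def by (rule PP_integral(1)[OF P]) simp
qed

lemma sq_Lr: "\<eta> \<in> LC \<Longrightarrow> (\<lambda>x. (\<xi> x - \<eta> x)\<^sup>2) \<in> Lp M rr"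
  using prod_Lr[OF Lpp_diff[OF xi_Lp LC_Lpp] Lpp_diff[OF xi_Lp LC_Lpp], of \<eta> \<eta>]
  by (simp add: power2_eq_square)

lemma Phi_bdd: "\<eta> \<in> LC \<Longrightarrow> \<exists>K. \<forall>P\<in>PP. Phi P \<eta> \<le> K"
proof -
  assume eta: "\<eta> \<in> LC"
  obtain K where K: "\<forall>P\<in>PP. (\<integral>x. dens M P x * ((\<xi> x - \<eta> x) * (\<xi> x - \<eta> x)) \<partial>M) \<le> K"
    using bound3[OF Lpp_diff[OF xi_Lp LC_Lpp[OF eta]]] by blast
  show ?thesis using K Phi_dens[OF _ eta] by (auto simp: power2_eq_square)
qed

lemma bdd_below_Phi: "bdd_below ((\<lambda>\<eta>. Phi P \<eta>) ` A)"
  by (rule bdd_belowI[of _ 0]) (auto simp: Phi_nonneg)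

lemma G_le: "\<eta> \<in> LC \<Longrightarrow> G P \<le> Phi P \<eta>"
  unfolding G_def by (rule cINF_lower[OF bdd_below_Phi])

lemma G_nonneg: "0 \<le> G P"
  unfolding G_def using zero_LC by (intro cINF_greatest) (auto simp: Phi_nonneg)

lemma PP_ne: "PP \<noteq> {}"
  using attain Lpp_const[of 0] by auto

lemma G_bdd: "bdd_above (G ` PP)"
proof -
  obtain K where K: "\<forall>P\<in>PP. Phi P (\<lambda>x. 0) \<le> K" using Phi_bdd[OF zero_LC] by blast
  show ?thesis
  proof (rule bdd_aboveI)
    fix x assume "x \<in> G ` PP"
    then obtain P where "P \<in> PP" "x = G P" by blast
    then show "x \<le> K" using K G_le[OF zero_LC, of P] by force
  qed
qed

lemma max_exists: "\<exists>Ps\<in>PP. \<forall>P\<in>PP. G P \<le> G Ps"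
proof (rule ccontr)
  assume nm: "\<not> ?thesis"
  define S where "S = (SUP P\<in>PP. G P)"
  have lt: "G P < S" if P: "P \<in> PP" for P
  proof -
    obtain P' where "P' \<in> PP" "G P < G P'" using nm P by force
    moreover have "G P' \<le> S" unfolding S_def by (rule cSUP_upper[OF \<open>P' \<in> PP\<close> G_bdd])
    ultimately show ?thesis by simp
  qed
  define V where "V c = {f \<in> Lp M qq. \<exists>\<eta>\<in>LC. (\<integral>x. f x * (\<xi> x - \<eta> x)\<^sup>2 \<partial>M) < c}" for c
  let ?X = "weak_Lp_topology M qq rr"
  have cpt': "compactin ?X (dens M ` PP)" using cpt unfolding qq_def rr_def .
  have opn: "openin ?X (V c)" for c
  proof -
    have "V c = \<Union> ((\<lambda>\<eta>. {f \<in> Lp M qq. (\<integral>x. f x * (\<xi> x - \<eta> x)\<^sup>2 \<partial>M) \<in> {..<c}}) ` LC)"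
      unfolding V_def by auto
    also have "openin ?X \<dots>"
    proof (rule openin_Union)
      fix U assume "U \<in> (\<lambda>\<eta>. {f \<in> Lp M qq. (\<integral>x. f x * (\<xi> x - \<eta> x)\<^sup>2 \<partial>M) \<in> {..<c}}) ` LC"
      then obtain \<eta> where eta: "\<eta> \<in> LC" and U: "U = {f \<in> Lp M qq. (\<integral>x. f x * (\<xi> x - \<eta> x)\<^sup>2 \<partial>M) \<in> {..<c}}"
        by blast
      have "U \<in> {{f \<in> Lp M qq. (\<integral>x. f x * g x \<partial>M) \<in> U} | g U. g \<in> Lp M rr \<and> open U}"
        by (rule CollectI, rule exI[of _ "\<lambda>x. (\<xi> x - \<eta> x)\<^sup>2"], rule exI[of _ "{..<c}"])
           (simp add: U sq_Lr[OF eta])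
      then show "openin ?X U" unfolding weak_Lp_topology_def
        by (rule topology_generated_by_Basis)
    qed
    finally show ?thesis .
  qed
  have cover: "dens M ` PP \<subseteq> \<Union> (V ` {..<S})"
  proof
    fix f assume "f \<in> dens M ` PP"
    then obtain P where P: "P \<in> PP" and f: "f = dens M P" by blast
    obtain c where c: "G P < c" "c < S" using lt[OF P] dense by blast
    then obtain \<eta> where eta: "\<eta> \<in> LC" "Phi P \<eta> < c"
      unfolding G_def using cINF_less_iff[OF LC_ne bdd_below_Phi] by blast
    have "f \<in> V c" unfolding V_def f using eta dens_Lq[OF P] Phi_dens[OF P eta(1)] by auto
    then show "f \<in> \<Union> (V ` {..<S})" using c by blast
  qed
  have opn': "\<forall>U\<in>V ` {..<S}. openin ?X U" using opn by blast
  obtain F where F: "finite F" "F \<subseteq> V ` {..<S}" "dens M ` PP \<subseteq> \<Union>F"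
    using conjunct2[OF cpt'[unfolded compactin_def], rule_format, of "V ` {..<S}"] opn' cover by blast
  obtain C0 where C0: "C0 \<subseteq> {..<S}" "finite C0" "F = V ` C0"
    using finite_subset_image[OF F(1,2)] by blast
  have "C0 \<noteq> {}" using F(3) C0(3) PP_ne by auto
  define c0 where "c0 = Max C0"
  have c0S: "c0 < S" unfolding c0_def using C0 \<open>C0 \<noteq> {}\<close> by auto
  have "G P \<le> c0" if P: "P \<in> PP" for P
  proof -
    have "dens M P \<in> \<Union>F" using F(3) P by blast
    then obtain c where c: "c \<in> C0" "dens M P \<in> V c" using C0(3) by blast
    then obtain \<eta> where eta: "\<eta> \<in> LC" "(\<integral>x. dens M P x * (\<xi> x - \<eta> x)\<^sup>2 \<partial>M) < c"
      unfolding V_def by blast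
    have "G P \<le> Phi P \<eta>" by (rule G_le[OF eta(1)])
    also have "\<dots> < c" using eta Phi_dens[OF P eta(1)] by simp
    also have "c \<le> c0" unfolding c0_def using c C0 by simp
    finally show ?thesis by simp
  qed
  then have "S \<le> c0" unfolding S_def using PP_ne by (intro cSUP_least) auto
  then show False using c0S by simp
qed

end



lemma quad_ineq:
  fixes \<alpha> \<beta> x y :: real
  assumes "0 \<le> \<alpha>" "0 \<le> \<beta>" "0 < \<alpha> + \<beta>"
  shows "\<alpha> * \<beta> / (\<alpha> + \<beta>) * (x - y)\<^sup>2 \<le> \<alpha> * x\<^sup>2 + \<beta> * y\<^sup>2"
proof -
  have "(\<alpha> + \<beta>) * (\<alpha> * x\<^sup>2 + \<beta> * y\<^sup>2) - \<alpha> * \<beta> * (x - y)\<^sup>2 = (\<alpha> * x + \<beta> * y)\<^sup>2"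
    by (simp add: power2_eq_square algebra_simps)
  then have "\<alpha> * \<beta> * (x - y)\<^sup>2 \<le> (\<alpha> + \<beta>) * (\<alpha> * x\<^sup>2 + \<beta> * y\<^sup>2)"
    using zero_le_power2[of "\<alpha> * x + \<beta> * y"] by linarith
  then have "\<alpha> * \<beta> * (x - y)\<^sup>2 / (\<alpha> + \<beta>) \<le> \<alpha> * x\<^sup>2 + \<beta> * y\<^sup>2"
    using assms(3) by (simp add: divide_le_eq mult.commute)
  then show ?thesis by simp
qed

context setting
begin

interpretation M: prob_space M by (rule PS)

lemma dens_sq_int: "P \<in> PP \<Longrightarrow> \<eta> \<in> LC \<Longrightarrow> integrable M (\<lambda>x. dens M P x * (\<xi> x - \<eta> x)\<^sup>2)"
  using int3[of P "\<lambda>x. \<xi> x - \<eta> x" "\<lambda>x. \<xi> x - \<eta> x"] Lpp_diff[OF xi_Lp LC_Lpp, of \<eta>]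
  by (simp add: power2_eq_square)

lemma mix:
  assumes Ps: "Ps \<in> PP" and P: "P \<in> PP" and t: "0 \<le> t" "t \<le> 1"
  shows "\<exists>Pt\<in>PP. \<forall>\<eta>\<in>LC. Phi Pt \<eta> = (1 - t) * Phi Ps \<eta> + t * Phi P \<eta>"
proof -
  define ft where "ft x = (1 - t) * dens M Ps x + t * dens M P x" for x
  have ftm[measurable]: "ft \<in> borel_measurable M" unfolding ft_def by simp
  have ftp: "0 \<le> ft x" for x unfolding ft_def using t dens_nonneg[of Ps x] dens_nonneg[of P x] by simp
  define Pt where "Pt = density M (\<lambda>x. ennreal (ft x))"
  have sPt: "sets Pt = sets M" unfolding Pt_def by simp
  have ftint: "integrable M ft" unfolding ft_def using dens_int1[OF Ps] dens_int1[OF P] by simp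
  have ft1: "(\<integral>x. ft x \<partial>M) = 1" unfolding ft_def using dens_int1[OF Ps] dens_int1[OF P] by simp
  have pPt: "prob_space Pt"
  proof
    have "emeasure Pt (space Pt) = emeasure Pt (space M)" using sets_eq_imp_space_eq[OF sPt] by simp
    also have "\<dots> = (\<integral>\<^sup>+ x. ennreal (ft x) * indicator (space M) x \<partial>M)"
      unfolding Pt_def by (rule emeasure_density) auto
    also have "\<dots> = (\<integral>\<^sup>+ x. ennreal (ft x) \<partial>M)"
      by (rule nn_integral_cong) auto
    also have "\<dots> = ennreal (\<integral>x. ft x \<partial>M)"
      by (rule nn_integral_eq_integral[OF ftint]) (simp add: ftp)
    finally show "emeasure Pt (space Pt) = 1" using ft1 by simp
  qed
  have intPt: "integrable Pt h \<longleftrightarrow> integrable M (\<lambda>x. ft x * h x)"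
    and integPt: "integral\<^sup>L Pt h = (\<integral>x. ft x * h x \<partial>M)"
    if [measurable]: "h \<in> borel_measurable M" for h :: "'a \<Rightarrow> real"
  proof -
    show "integrable Pt h \<longleftrightarrow> integrable M (\<lambda>x. ft x * h x)"
      unfolding Pt_def by (subst integrable_density) (auto simp: ftp)
    show "integral\<^sup>L Pt h = (\<integral>x. ft x * h x \<partial>M)"
      unfolding Pt_def by (subst integral_density) (auto simp: ftp)
  qed
  have split: "integrable M (\<lambda>x. ft x * h x) \<and> (\<integral>x. ft x * h x \<partial>M) = (1 - t) * (\<integral>x. dens M Ps x * h x \<partial>M) + t * (\<integral>x. dens M P x * h x \<partial>M)"
    if i1: "integrable M (\<lambda>x. dens M Ps x * h x)" and i2: "integrable M (\<lambda>x. dens M P x * h x)" for h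
  proof -
    have e: "(\<lambda>x. ft x * h x) = (\<lambda>x. (1 - t) * (dens M Ps x * h x) + t * (dens M P x * h x))"
      unfolding ft_def by (auto simp: algebra_simps)
    show ?thesis unfolding e using i1 i2 by simp
  qed
  have PtPP: "Pt \<in> PP"
    unfolding rep_set_def
  proof (intro CollectI conjI ballI)
    show "prob_space Pt" by (rule pPt)
    show "sets Pt = sets M" by (rule sPt)
    fix \<zeta> assume z: "\<zeta> \<in> Lpp"
    have [measurable]: "\<zeta> \<in> borel_measurable M" using z by (rule Lpp_meas)
    have i1: "integrable M (\<lambda>x. dens M Ps x * \<zeta> x)" using PP_D(3)[OF Ps z] PP_integral(2)[OF Ps] by auto
    have i2: "integrable M (\<lambda>x. dens M P x * \<zeta> x)" using PP_D(3)[OF P z] PP_integral(2)[OF P] by auto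
    show "integrable Pt \<zeta>" using split[OF i1 i2] intPt by simp
    have "(\<integral>x. \<zeta> x \<partial>Pt) = (1 - t) * (\<integral>x. \<zeta> x \<partial>Ps) + t * (\<integral>x. \<zeta> x \<partial>P)"
      using split[OF i1 i2] integPt PP_integral(1)[OF Ps] PP_integral(1)[OF P] by simp
    also have "\<dots> \<le> (1 - t) * \<rho> \<zeta> + t * \<rho> \<zeta>"
      using PP_D(3)[OF Ps z] PP_D(3)[OF P z] t by (intro add_mono mult_left_mono) auto
    finally show "(\<integral>x. \<zeta> x \<partial>Pt) \<le> \<rho> \<zeta>" by (simp add: algebra_simps)
  qed
  show ?thesis
  proof (intro bexI[OF _ PtPP] ballI)
    fix \<eta> assume eta: "\<eta> \<in> LC"
    have [measurable]: "\<eta> \<in> borel_measurable M" by (rule LC_measM[OF eta])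
    show "Phi Pt \<eta> = (1 - t) * Phi Ps \<eta> + t * Phi P \<eta>"
      unfolding Phi_def[of Pt] using integPt[of "\<lambda>x. (\<xi> x - \<eta> x)\<^sup>2"] split[OF dens_sq_int[OF Ps eta] dens_sq_int[OF P eta]]
        Phi_dens[OF Ps eta] Phi_dens[OF P eta] by simp
  qed
qed

end



context setting
begin

interpretation M: prob_space M by (rule PS)

lemma key:
  assumes Ps: "Ps \<in> PP" and mx: "\<forall>P\<in>PP. G P \<le> G Ps"
    and a: "a \<in> LC" and gsC: "gs \<in> borel_measurable C" and gsp: "AE x in M. 0 < gs x"
    and pa: "\<forall>\<eta>\<in>LC. integrable M (\<lambda>x. gs x * (a x - \<eta> x)\<^sup>2) \<and>
        Phi Ps \<eta> = Phi Ps a + (\<integral>x. gs x * (a x - \<eta> x)\<^sup>2 \<partial>M)"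
    and P: "P \<in> PP"
  shows "Phi P a \<le> Phi Ps a"
proof -
  obtain b g where b: "b \<in> LC" and gC: "g \<in> borel_measurable C" and gp: "AE x in M. 0 < g x"
    and pb: "\<forall>\<eta>\<in>LC. integrable M (\<lambda>x. g x * (b x - \<eta> x)\<^sup>2) \<and>
        Phi P \<eta> = Phi P b + (\<integral>x. g x * (b x - \<eta> x)\<^sup>2 \<partial>M)"
    using pyth[OF P] unfolding Phi_def by blast
  have [measurable]: "g \<in> borel_measurable M" "gs \<in> borel_measurable M" using gC gsC by (auto intro: measC_M)
  have [measurable]: "a \<in> borel_measurable M" "b \<in> borel_measurable M" using a b by (auto intro: LC_measM)
  have Gs: "G Ps = Phi Ps a"
  proof (rule antisym)
    show "G Ps \<le> Phi Ps a" by (rule G_le[OF a])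
    show "Phi Ps a \<le> G Ps" unfolding G_def
    proof (rule cINF_greatest[OF LC_ne])
      fix \<eta> assume eta: "\<eta> \<in> LC"
      have "0 \<le> (\<integral>x. gs x * (a x - \<eta> x)\<^sup>2 \<partial>M)"
        by (rule integral_nonneg_AE) (use gsp in \<open>auto elim!: eventually_mono\<close>)
      then show "Phi Ps a \<le> Phi Ps \<eta>" using pa eta by auto
    qed
  qed
  define v where "v t x = (1 - t) * gs x * g x / ((1 - t) * gs x + t * g x)" for t x
  have iba: "integrable M (\<lambda>x. g x * (b x - a x)\<^sup>2)" and Pa: "Phi P a = Phi P b + (\<integral>x. g x * (b x - a x)\<^sup>2 \<partial>M)"
    using pb a by auto
  have vle: "AE x in M. \<bar>v t x * (b x - a x)\<^sup>2\<bar> \<le> g x * (b x - a x)\<^sup>2" if t: "0 < t" "t < 1" for t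
    using gp gsp
  proof eventually_elim
    case (elim x)
    have d: "0 < (1 - t) * gs x + t * g x" using elim t by (simp add: add_pos_pos)
    have "0 \<le> v t x" unfolding v_def using elim t d by simp
    moreover have "v t x \<le> g x" unfolding v_def using elim t d
      by (simp add: divide_le_eq mult.commute mult.left_commute)
    ultimately show ?case by (simp add: mult_right_mono)
  qed
  have vint: "integrable M (\<lambda>x. v t x * (b x - a x)\<^sup>2)" if t: "0 < t" "t < 1" for t
    by (rule Bochner_Integration.integrable_bound[OF iba]) (use vle[OF t] in \<open>auto simp: v_def\<close>)
  have step: "Phi P b + (\<integral>x. v t x * (b x - a x)\<^sup>2 \<partial>M) \<le> G Ps" if t: "0 < t" "t < 1" for t
  proof -
    obtain Pt where Pt: "Pt \<in> PP" and mixt: "\<forall>\<eta>\<in>LC. Phi Pt \<eta> = (1 - t) * Phi Ps \<eta> + t * Phi P \<eta>"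
    proof -
      have "0 \<le> t" "t \<le> 1" using t by auto
      from mix[OF Ps P this] show ?thesis using that by blast
    qed
    have low: "(1 - t) * G Ps + t * Phi P b + t * (\<integral>x. v t x * (b x - a x)\<^sup>2 \<partial>M) \<le> Phi Pt \<eta>"
      if eta: "\<eta> \<in> LC" for \<eta>
    proof -
      have i1: "integrable M (\<lambda>x. gs x * (a x - \<eta> x)\<^sup>2)" and e1: "Phi Ps \<eta> = Phi Ps a + (\<integral>x. gs x * (a x - \<eta> x)\<^sup>2 \<partial>M)"
        using pa eta by auto
      have i2: "integrable M (\<lambda>x. g x * (b x - \<eta> x)\<^sup>2)" and e2: "Phi P \<eta> = Phi P b + (\<integral>x. g x * (b x - \<eta> x)\<^sup>2 \<partial>M)"
        using pb eta by auto
      have "(\<integral>x. t * (v t x * (b x - a x)\<^sup>2) \<partial>M) \<le> (\<integral>x. (1 - t) * (gs x * (a x - \<eta> x)\<^sup>2) + t * (g x * (b x - \<eta> x)\<^sup>2) \<partial>M)"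
      proof (rule integral_mono_AE)
        show "integrable M (\<lambda>x. t * (v t x * (b x - a x)\<^sup>2))" using vint[OF t] by simp
        show "integrable M (\<lambda>x. (1 - t) * (gs x * (a x - \<eta> x)\<^sup>2) + t * (g x * (b x - \<eta> x)\<^sup>2))"
          using i1 i2 by simp
        show "AE x in M. t * (v t x * (b x - a x)\<^sup>2) \<le> (1 - t) * (gs x * (a x - \<eta> x)\<^sup>2) + t * (g x * (b x - \<eta> x)\<^sup>2)"
          using gp gsp
        proof eventually_elim
          case (elim x)
          have d: "0 < (1 - t) * gs x + t * g x" using elim t by (simp add: add_pos_pos)
          have q: "((1 - t) * gs x) * (t * g x) / ((1 - t) * gs x + t * g x) * ((a x - \<eta> x) - (b x - \<eta> x))\<^sup>2
              \<le> ((1 - t) * gs x) * (a x - \<eta> x)\<^sup>2 + (t * g x) * (b x - \<eta> x)\<^sup>2"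
            by (rule quad_ineq) (use elim t d in auto)
          have "t * (v t x * (b x - a x)\<^sup>2) = ((1 - t) * gs x) * (t * g x) / ((1 - t) * gs x + t * g x) * ((a x - \<eta> x) - (b x - \<eta> x))\<^sup>2"
            unfolding v_def by (simp add: power2_commute)
          then show ?case using q by (simp add: mult.assoc)
        qed
      qed
      also have "\<dots> = (1 - t) * (\<integral>x. gs x * (a x - \<eta> x)\<^sup>2 \<partial>M) + t * (\<integral>x. g x * (b x - \<eta> x)\<^sup>2 \<partial>M)"
        using i1 i2 by simp
      finally have fin: "t * (\<integral>x. v t x * (b x - a x)\<^sup>2 \<partial>M) \<le> (1 - t) * (\<integral>x. gs x * (a x - \<eta> x)\<^sup>2 \<partial>M) + t * (\<integral>x. g x * (b x - \<eta> x)\<^sup>2 \<partial>M)"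
        by simp
      have mt: "Phi Pt \<eta> = (1 - t) * Phi Ps \<eta> + t * Phi P \<eta>" using mixt eta by blast
      show ?thesis unfolding mt e1 e2 Gs using fin by (simp add: algebra_simps)
    qed
    have "(1 - t) * G Ps + t * Phi P b + t * (\<integral>x. v t x * (b x - a x)\<^sup>2 \<partial>M) \<le> G Pt"
      unfolding G_def[of Pt] by (rule cINF_greatest[OF LC_ne]) (rule low)
    also have "G Pt \<le> G Ps" using mx Pt by blast
    finally have "t * (Phi P b + (\<integral>x. v t x * (b x - a x)\<^sup>2 \<partial>M)) \<le> t * G Ps"
      by (simp add: algebra_simps)
    then show ?thesis using t by simp
  qed
  define s where "s n = 1 / (real n + 2)" for n :: nat
  have s: "0 < s n" "s n < 1" for n unfolding s_def by auto
  have "s \<longlonglongrightarrow> 0"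
  proof -
    have "(\<lambda>n. inverse (real (Suc (Suc n)))) \<longlonglongrightarrow> 0" by (rule LIMSEQ_Suc[OF LIMSEQ_inverse_real_of_nat])
    moreover have "(\<lambda>n. inverse (real (Suc (Suc n)))) = s"
      by (auto simp: s_def fun_eq_iff divide_inverse add.commute)
    ultimately show ?thesis by simp
  qed
  have lim: "(\<lambda>n. \<integral>x. v (s n) x * (b x - a x)\<^sup>2 \<partial>M) \<longlonglongrightarrow> (\<integral>x. g x * (b x - a x)\<^sup>2 \<partial>M)"
  proof (rule integral_dominated_convergence[where w="\<lambda>x. g x * (b x - a x)\<^sup>2"])
    show "integrable M (\<lambda>x. g x * (b x - a x)\<^sup>2)" by (rule iba)
    show "(\<lambda>x. g x * (b x - a x)\<^sup>2) \<in> borel_measurable M" by simp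
    show "(\<lambda>x. v (s n) x * (b x - a x)\<^sup>2) \<in> borel_measurable M" for n unfolding v_def by simp
    show "AE x in M. norm (v (s n) x * (b x - a x)\<^sup>2) \<le> g x * (b x - a x)\<^sup>2" for n
      using vle[OF s] by simp
    show "AE x in M. (\<lambda>n. v (s n) x * (b x - a x)\<^sup>2) \<longlonglongrightarrow> g x * (b x - a x)\<^sup>2"
      using gsp
    proof eventually_elim
      case (elim x)
      have "(\<lambda>n. (1 - s n) * gs x * g x / ((1 - s n) * gs x + s n * g x)) \<longlonglongrightarrow> (1 - 0) * gs x * g x / ((1 - 0) * gs x + 0 * g x)"
        using elim \<open>s \<longlonglongrightarrow> 0\<close> by (intro tendsto_intros) auto
      then have "(\<lambda>n. v (s n) x) \<longlonglongrightarrow> g x" unfolding v_def using elim by simp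
      then show ?case by (intro tendsto_intros)
    qed
  qed
  have "Phi P b + (\<integral>x. g x * (b x - a x)\<^sup>2 \<partial>M) \<le> G Ps"
  proof -
    have "(\<lambda>n. Phi P b + (\<integral>x. v (s n) x * (b x - a x)\<^sup>2 \<partial>M)) \<longlonglongrightarrow> Phi P b + (\<integral>x. g x * (b x - a x)\<^sup>2 \<partial>M)"
      by (intro tendsto_intros lim)
    then show ?thesis by (rule LIMSEQ_le_const2) (use step[OF s] in auto)
  qed
  then show ?thesis using Pa Gs by simp
qed

end

theorem theorem3:
  fixes M C :: "'a measure" and \<epsilon> :: real and \<rho> :: "('a \<Rightarrow> real) \<Rightarrow> real" and \<xi> :: "'a \<Rightarrow> real"
  assumes "prob_space M" and "complete_measure M"
    and "0 < \<epsilon>" and "\<epsilon> < 1"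
    and "subalgebra M C"
    and "sublinear_operator M (2 + \<epsilon>) \<rho>"
    and "\<forall>\<zeta>\<in>Lp M (2 + \<epsilon>). \<exists>P\<in>rep_set M (2 + \<epsilon>) \<rho>. (\<integral>x. \<zeta> x \<partial>P) = \<rho> \<zeta>"
    and "\<forall>P\<in>rep_set M (2 + \<epsilon>) \<rho>. absolutely_continuous M P \<and> absolutely_continuous P M"
    and "\<forall>P\<in>rep_set M (2 + \<epsilon>) \<rho>. dens M P \<in> Lp M (1 + 2 / \<epsilon>)"
    and "\<exists>B. \<forall>P\<in>rep_set M (2 + \<epsilon>) \<rho>. (\<integral>x. \<bar>dens M P x\<bar> powr (1 + 2 / \<epsilon>) \<partial>M) \<le> B"
    and "compactin (weak_Lp_topology M (1 + 2 / \<epsilon>) (1 + \<epsilon> / 2))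
           (dens M ` rep_set M (2 + \<epsilon>) \<rho>)"
    and "\<xi> \<in> Lp M (4 + 2 * \<epsilon>)"
    and "stable M C (rep_set M (2 + \<epsilon>) \<rho>)"
  shows "\<exists>\<eta>h\<in>Lp_sub M C (2 + \<epsilon>).
           rho_sq (rep_set M (2 + \<epsilon>) \<rho>) \<xi> \<eta>h =
           (INF \<eta>\<in>Lp_sub M C (2 + \<epsilon>). rho_sq (rep_set M (2 + \<epsilon>) \<rho>) \<xi> \<eta>)"
proof -
  interpret S: setting M C \<epsilon> \<rho> \<xi> unfolding setting_def using assms by blast
  obtain Ps where Ps: "Ps \<in> S.PP" and mx: "\<forall>P\<in>S.PP. S.G P \<le> S.G Ps" using S.max_exists by blast
  obtain a gs where a: "a \<in> S.LC" and gsC: "gs \<in> borel_measurable C" and gsp: "AE x in M. 0 < gs x"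
    and pa: "\<forall>\<eta>\<in>S.LC. integrable M (\<lambda>x. gs x * (a x - \<eta> x)\<^sup>2) \<and>
        S.Phi Ps \<eta> = S.Phi Ps a + (\<integral>x. gs x * (a x - \<eta> x)\<^sup>2 \<partial>M)"
    using S.pyth[OF Ps] unfolding S.Phi_def by blast
  have keyP: "S.Phi P a \<le> S.Phi Ps a" if "P \<in> S.PP" for P
    by (rule S.key[OF Ps mx a gsC gsp pa that])
  have rs: "rho_sq S.PP \<xi> \<eta> = (SUP P\<in>S.PP. S.Phi P \<eta>)" for \<eta>
    unfolding rho_sq_def S.Phi_def by simp
  have bddP: "bdd_above ((\<lambda>P. S.Phi P \<eta>) ` S.PP)" if "\<eta> \<in> S.LC" for \<eta>
    using S.Phi_bdd[OF that] by (auto intro: bdd_aboveI2)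
  have ra: "rho_sq S.PP \<xi> a = S.Phi Ps a"
  proof (rule antisym)
    show "rho_sq S.PP \<xi> a \<le> S.Phi Ps a" unfolding rs by (rule cSUP_least[OF S.PP_ne keyP])
    show "S.Phi Ps a \<le> rho_sq S.PP \<xi> a" unfolding rs by (rule cSUP_upper[OF Ps bddP[OF a]])
  qed
  have lowr: "S.Phi Ps a \<le> rho_sq S.PP \<xi> \<eta>" if eta: "\<eta> \<in> S.LC" for \<eta>
  proof -
    have "0 \<le> (\<integral>x. gs x * (a x - \<eta> x)\<^sup>2 \<partial>M)"
      by (rule integral_nonneg_AE) (use gsp in \<open>auto elim!: eventually_mono\<close>)
    then have "S.Phi Ps a \<le> S.Phi Ps \<eta>" using pa eta by auto
    also have "\<dots> \<le> rho_sq S.PP \<xi> \<eta>" unfolding rs by (rule cSUP_upper[OF Ps bddP[OF eta]])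
    finally show ?thesis .
  qed
  show ?thesis
  proof (rule bexI[OF _ a])
    show "rho_sq S.PP \<xi> a = (INF \<eta>\<in>S.LC. rho_sq S.PP \<xi> \<eta>)"
    proof (rule antisym)
      show "rho_sq S.PP \<xi> a \<le> (INF \<eta>\<in>S.LC. rho_sq S.PP \<xi> \<eta>)"
        unfolding ra by (rule cINF_greatest[OF S.LC_ne lowr])
      show "(INF \<eta>\<in>S.LC. rho_sq S.PP \<xi> \<eta>) \<le> rho_sq S.PP \<xi> a"
        by (rule cINF_lower[OF _ a]) (rule bdd_belowI[of _ "S.Phi Ps a"], use lowr in blast)
    qed
  qed
qed


end
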